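(* Let $U$ and $V$ be finite-dimensional vector spaces over a field $\mathbb{K}$. (a) Every range-compatible linear map on $\mathcal{L}(U,V)$ is local. (b) If $\dim V>1$, every range-compatible group homomorphism on $\mathcal{L}(U,V)$ is local.
   Context: A map $F:\mathcal{L}(U,V)\to V$ is range-compatible when $F(s)\in\operatorname{im}s$ for all $s$, and local when there is $x\in U$ with $F(s)=s(x)$ for all $s$. *)

theory Defs
  imports "HOL.Vector_Spaces"
begin

text \<open>The space L(U,V) is the set of K-linear maps s :: 'u => 'v, with pointwise
operations.  A map F on L(U,V) is a function ('u => 'v) => 'v, only relevant on
linear arguments.\<close>

definition Lmaps :: "('k::field \<Rightarrow> 'u::ab_group_add \<Rightarrow> 'u) \<Rightarrow> ('k \<Rightarrow> 'v::ab_group_add \<Rightarrow> 'v) \<Rightarrow> ('u \<Rightarrow> 'v) set"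
  where "Lmaps sU sV = {s. Vector_Spaces.linear sU sV s}"

definition fin_dim :: "('k::field \<Rightarrow> 'u::ab_group_add \<Rightarrow> 'u) \<Rightarrow> bool"
  where "fin_dim sU \<longleftrightarrow> (\<exists>B. finite B \<and> module.span sU B = UNIV)"

definition range_compatible ::
  "('k::field \<Rightarrow> 'u::ab_group_add \<Rightarrow> 'u) \<Rightarrow> ('k \<Rightarrow> 'v::ab_group_add \<Rightarrow> 'v) \<Rightarrow> (('u \<Rightarrow> 'v) \<Rightarrow> 'v) \<Rightarrow> bool"
  where "range_compatible sU sV F \<longleftrightarrow> (\<forall>s \<in> Lmaps sU sV. F s \<in> range s)"

definition local_map ::
  "('k::field \<Rightarrow> 'u::ab_group_add \<Rightarrow> 'u) \<Rightarrow> ('k \<Rightarrow> 'v::ab_group_add \<Rightarrow> 'v) \<Rightarrow> (('u \<Rightarrow> 'v) \<Rightarrow> 'v) \<Rightarrow> bool"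
  where "local_map sU sV F \<longleftrightarrow> (\<exists>x. \<forall>s \<in> Lmaps sU sV. F s = s x)"

definition additive_on_L ::
  "('k::field \<Rightarrow> 'u::ab_group_add \<Rightarrow> 'u) \<Rightarrow> ('k \<Rightarrow> 'v::ab_group_add \<Rightarrow> 'v) \<Rightarrow> (('u \<Rightarrow> 'v) \<Rightarrow> 'v) \<Rightarrow> bool"
  where "additive_on_L sU sV F \<longleftrightarrow>
    (\<forall>s \<in> Lmaps sU sV. \<forall>t \<in> Lmaps sU sV. F (\<lambda>x. s x + t x) = F s + F t)"

definition linear_on_L ::
  "('k::field \<Rightarrow> 'u::ab_group_add \<Rightarrow> 'u) \<Rightarrow> ('k \<Rightarrow> 'v::ab_group_add \<Rightarrow> 'v) \<Rightarrow> (('u \<Rightarrow> 'v) \<Rightarrow> 'v) \<Rightarrow> bool"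
  where "linear_on_L sU sV F \<longleftrightarrow> additive_on_L sU sV F \<and>
    (\<forall>c. \<forall>s \<in> Lmaps sU sV. F (\<lambda>x. sV c (s x)) = sV c (F s))"

end

theory Submission
  imports Defs
begin

lemma lin_sum:
  fixes s1 :: "'k::field \<Rightarrow> 'a::ab_group_add \<Rightarrow> 'a" and s2 :: "'k \<Rightarrow> 'b::ab_group_add \<Rightarrow> 'b"
  assumes "vector_space s1" "vector_space s2" "\<forall>i\<in>I. Vector_Spaces.linear s1 s2 (f i)"
  shows "Vector_Spaces.linear s1 s2 (\<lambda>x. \<Sum>i\<in>I. f i x)"
proof -
  interpret vector_space_pair s1 s2 using assms unfolding vector_space_pair_def by auto
  show ?thesis by (rule linear_compose_sum) (rule assms(3))
qed

lemma vs_field: "vector_space ((*) :: 'k::field \<Rightarrow> 'k \<Rightarrow> 'k)"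
  by unfold_locales (auto simp: algebra_simps)

locale twovs = U: vector_space sU + V: vector_space sV
  for sU :: "'k::field \<Rightarrow> 'u::ab_group_add \<Rightarrow> 'u" and sV :: "'k \<Rightarrow> 'v::ab_group_add \<Rightarrow> 'v"
begin

lemma rank1_lin:
  assumes "Vector_Spaces.linear sU (*) \<phi>" shows "Vector_Spaces.linear sU sV (\<lambda>u. sV (\<phi> u) v)"
  using assms unfolding linear_iff
  by (auto simp: U.vector_space_axioms V.vector_space_axioms V.scale_left_distrib V.scale_scale)

lemma indep_step:
  assumes gadd: "\<forall>v w. g (v + w) = g v + g w" and gm: "\<forall>v. \<exists>t. g v = sV t v"
    and u: "u \<noteq> 0" and v: "\<forall>c. v \<noteq> sV c u" and gu: "g u = sV a u"
  shows "g v = sV a v"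
proof -
  obtain t where t: "g (v + u) = sV t (v + u)" using gm by blast
  obtain b where b: "g v = sV b v" using gm by blast
  have "sV b v + sV a u = sV t v + sV t u" using t b gu gadd by (simp add: V.scale_right_distrib)
  hence e0: "sV b v - sV t v = sV t u - sV a u"
    by (metis add.commute add_diff_cancel_left' add_diff_cancel_right' add_diff_eq diff_add_eq)
  hence e: "sV (b - t) v = sV (t - a) u"
    by (simp only: V.scale_left_diff_distrib)
  have bt: "b = t"
  proof (rule ccontr)
    assume "b \<noteq> t"
    hence "sV (inverse (b - t)) (sV (b - t) v) = v" by (simp add: V.scale_scale)
    hence "v = sV (inverse (b - t) * (t - a)) u" using e by (simp add: V.scale_scale)
    thus False using v by blast
  qed
  hence "sV (t - a) u = 0" using e by simp
  hence "t = a" using u by simp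
  thus ?thesis using b bt by simp
qed

lemma scalar_g:
  assumes gadd: "\<forall>v w. g (v + w) = g v + g w" and gm: "\<forall>v. \<exists>t. g v = sV t v"
    and nz: "\<exists>u::'v. u \<noteq> 0"
    and hyp: "(\<exists>u w. u \<noteq> 0 \<and> (\<forall>c. w \<noteq> sV c u)) \<or> (\<forall>c v. g (sV c v) = sV c (g v))"
  shows "\<exists>a. \<forall>v. g v = sV a v"
  using hyp
proof
  assume "\<exists>u w. u \<noteq> 0 \<and> (\<forall>c. w \<noteq> sV c u)"
  then obtain u w where u: "u \<noteq> 0" and w: "\<forall>c. w \<noteq> sV c u" by blast
  obtain a where a: "g u = sV a u" using gm by blast
  have gw: "g w = sV a w" using indep_step[OF gadd gm u w a] .
  have w0: "w \<noteq> 0" using w[rule_format, of 0] by simp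
  have g0: "g 0 = 0" using gadd[rule_format, of 0 0] by simp
  have "g v = sV a v" for v
  proof (cases "\<forall>c. v \<noteq> sV c u")
    case True then show ?thesis using indep_step[OF gadd gm u _ a] by blast
  next
    case False
    then obtain c where c: "v = sV c u" by blast
    show ?thesis
    proof (cases "c = 0")
      case True then show ?thesis using c g0 by simp
    next
      case False
      have "\<forall>d. v \<noteq> sV d w"
      proof
        fix d show "v \<noteq> sV d w"
        proof
          assume h: "v = sV d w"
          have "d \<noteq> 0" using h c False u by auto
          have "sV (inverse d) (sV d w) = sV (inverse d) (sV c u)" using h c by simp
          hence "w = sV (inverse d * c) u" using \<open>d \<noteq> 0\<close> by (simp add: V.scale_scale)
          thus False using w by blast
        qed
      qed
      then show ?thesis using indep_step[OF gadd gm w0 _ gw] by blast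
    qed
  qed
  thus ?thesis by blast
next
  assume hom: "\<forall>c v. g (sV c v) = sV c (g v)"
  obtain u :: 'v where u: "u \<noteq> 0" using nz by blast
  obtain a where a: "g u = sV a u" using gm by blast
  have "g v = sV a v" for v
  proof (cases "\<forall>c. v \<noteq> sV c u")
    case True then show ?thesis using indep_step[OF gadd gm u _ a] by blast
  next
    case False
    then obtain c where c: "v = sV c u" by blast
    show ?thesis using hom a c by (simp add: V.scale_scale mult.commute)
  qed
  thus ?thesis by blast
qed

end

locale rcF = twovs sU sV
  for sU :: "'k::field \<Rightarrow> 'u::ab_group_add \<Rightarrow> 'u" and sV :: "'k \<Rightarrow> 'v::ab_group_add \<Rightarrow> 'v" +
  fixes F :: "('u \<Rightarrow> 'v) \<Rightarrow> 'v"
  assumes addF: "additive_on_L sU sV F" and rcF: "range_compatible sU sV F"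
    and nz: "\<exists>u::'v. u \<noteq> 0"
    and hyp: "(\<exists>u w. u \<noteq> 0 \<and> (\<forall>c. w \<noteq> sV c u)) \<or>
              (\<forall>c. \<forall>s\<in>Lmaps sU sV. F (\<lambda>x. sV c (s x)) = sV c (F s))"
    and finU: "fin_dim sU" and finV: "fin_dim sV"
begin

abbreviation lin :: "('u \<Rightarrow> 'k) \<Rightarrow> bool" where "lin \<phi> \<equiv> Vector_Spaces.linear sU (*) \<phi>"

lemma r_L: "lin \<phi> \<Longrightarrow> (\<lambda>u. sV (\<phi> u) v) \<in> Lmaps sU sV"
  unfolding Lmaps_def using rank1_lin by blast

lemma addF': "s \<in> Lmaps sU sV \<Longrightarrow> t \<in> Lmaps sU sV \<Longrightarrow> F (\<lambda>x. s x + t x) = F s + F t"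
  using addF unfolding additive_on_L_def by blast

lemma gexists: assumes "lin \<phi>" shows "\<exists>a. \<forall>v. F (\<lambda>u. sV (\<phi> u) v) = sV a v"
proof -
  let ?g = "\<lambda>v. F (\<lambda>u. sV (\<phi> u) v)"
  have gadd: "\<forall>v w. ?g (v + w) = ?g v + ?g w"
  proof (intro allI)
    fix v w
    have "(\<lambda>u. sV (\<phi> u) (v + w)) = (\<lambda>x. sV (\<phi> x) v + sV (\<phi> x) w)"
      by (simp add: V.scale_right_distrib)
    thus "?g (v + w) = ?g v + ?g w" using addF'[OF r_L[OF assms] r_L[OF assms]] by simp
  qed
  have gm: "\<forall>v. \<exists>t. ?g v = sV t v"
  proof
    fix v
    have "?g v \<in> range (\<lambda>u. sV (\<phi> u) v)" using rcF r_L[OF assms] unfolding range_compatible_def by blast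
    thus "\<exists>t. ?g v = sV t v" by blast
  qed
  have hyp': "(\<exists>u w. u \<noteq> 0 \<and> (\<forall>c. w \<noteq> sV c u)) \<or> (\<forall>c v. ?g (sV c v) = sV c (?g v))"
    using hyp
  proof
    assume h: "\<forall>c. \<forall>s\<in>Lmaps sU sV. F (\<lambda>x. sV c (s x)) = sV c (F s)"
    have "?g (sV c v) = sV c (?g v)" for c v
    proof -
      have "(\<lambda>u. sV (\<phi> u) (sV c v)) = (\<lambda>x. sV c (sV (\<phi> x) v))"
        by (simp add: V.scale_scale mult.commute)
      hence "?g (sV c v) = F (\<lambda>x. sV c (sV (\<phi> x) v))" by (rule arg_cong[where f=F])
      also have "\<dots> = sV c (?g v)" by (rule h[rule_format, OF r_L[OF assms]])
      finally show ?thesis .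
    qed
    thus ?thesis by blast
  qed blast
  show ?thesis using scalar_g[OF gadd gm nz hyp'] .
qed

definition alpha :: "('u \<Rightarrow> 'k) \<Rightarrow> 'k" where
  "alpha \<phi> = (SOME a. \<forall>v. F (\<lambda>u. sV (\<phi> u) v) = sV a v)"

lemma alpha_prop: "lin \<phi> \<Longrightarrow> F (\<lambda>u. sV (\<phi> u) v) = sV (alpha \<phi>) v"
  unfolding alpha_def using someI_ex[OF gexists] by blast

lemma alpha_unique:
  assumes "lin \<phi>" "u0 \<noteq> 0" "F (\<lambda>u. sV (\<phi> u) u0) = sV a u0"
  shows "alpha \<phi> = a"
  using alpha_prop[OF assms(1), of u0] assms(2,3) by simp

lemma lin_add: "lin \<phi> \<Longrightarrow> lin \<psi> \<Longrightarrow> lin (\<lambda>u. \<phi> u + \<psi> u)"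
  unfolding linear_iff by (auto simp: algebra_simps)

lemma lin_scale: "lin \<phi> \<Longrightarrow> lin (\<lambda>u. c * \<phi> u)"
  unfolding linear_iff by (auto simp: algebra_simps)

lemma lin_zero: "lin (\<lambda>u. 0)"
  unfolding linear_iff by (auto simp: U.vector_space_axioms vs_field)

lemma alpha_add: assumes "lin \<phi>" "lin \<psi>"
  shows "alpha (\<lambda>u. \<phi> u + \<psi> u) = alpha \<phi> + alpha \<psi>"
proof -
  obtain u0 :: 'v where u0: "u0 \<noteq> 0" using nz by blast
  have "(\<lambda>u. sV (\<phi> u + \<psi> u) u0) = (\<lambda>x. sV (\<phi> x) u0 + sV (\<psi> x) u0)"
    by (simp add: V.scale_left_distrib)
  hence "F (\<lambda>u. sV (\<phi> u + \<psi> u) u0) = sV (alpha \<phi> + alpha \<psi>) u0"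
    using addF'[OF r_L[OF assms(1)] r_L[OF assms(2)]] alpha_prop[OF assms(1)] alpha_prop[OF assms(2)]
    by (simp add: V.scale_left_distrib)
  thus ?thesis using alpha_unique[OF lin_add[OF assms] u0] by blast
qed

lemma alpha_scale: assumes "lin \<phi>"
  shows "alpha (\<lambda>u. c * \<phi> u) = c * alpha \<phi>"
proof -
  obtain u0 :: 'v where u0: "u0 \<noteq> 0" using nz by blast
  have "(\<lambda>u. sV (c * \<phi> u) u0) = (\<lambda>x. sV (\<phi> x) (sV c u0))"
    by (simp add: V.scale_scale mult.commute)
  hence "F (\<lambda>u. sV (c * \<phi> u) u0) = F (\<lambda>x. sV (\<phi> x) (sV c u0))" by (rule arg_cong[where f=F])
  also have "\<dots> = sV (alpha \<phi>) (sV c u0)" by (rule alpha_prop[OF assms])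
  also have "\<dots> = sV (c * alpha \<phi>) u0" by (simp add: V.scale_scale mult.commute)
  finally have "F (\<lambda>u. sV (c * \<phi> u) u0) = sV (c * alpha \<phi>) u0" .
  thus ?thesis using alpha_unique[OF lin_scale[OF assms] u0] by blast
qed

lemma alpha_zero: "alpha (\<lambda>u. 0) = 0"
  using alpha_scale[OF lin_zero, of 0] by simp

lemma alpha_sum: assumes "finite I" "\<forall>i\<in>I. lin (f i)"
  shows "alpha (\<lambda>u. \<Sum>i\<in>I. f i u) = (\<Sum>i\<in>I. alpha (f i))"
  using assms
proof (induction I rule: finite_induct)
  case empty show ?case unfolding sum.empty by (rule alpha_zero)
next
  case (insert i I)
  have pI: "\<forall>i\<in>I. lin (f i)" using insert.prems by blast
  have fi: "lin (f i)" using insert.prems by blast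
  have l: "lin (\<lambda>u. \<Sum>i\<in>I. f i u)"
    by (rule lin_sum[OF U.vector_space_axioms vs_field pI])
  have e: "(\<lambda>u. \<Sum>i\<in>insert i I. f i u) = (\<lambda>u. f i u + (\<Sum>i\<in>I. f i u))"
    by (simp only: sum.insert[OF insert.hyps])
  have "alpha (\<lambda>u. \<Sum>i\<in>insert i I. f i u) = alpha (\<lambda>u. f i u + (\<Sum>i\<in>I. f i u))"
    unfolding e ..
  also have "\<dots> = alpha (f i) + alpha (\<lambda>u. \<Sum>i\<in>I. f i u)"
    by (rule alpha_add[OF fi l])
  also have "\<dots> = alpha (f i) + (\<Sum>i\<in>I. alpha (f i))" unfolding insert.IH[OF pI] ..
  also have "\<dots> = (\<Sum>i\<in>insert i I. alpha (f i))"
    by (simp only: sum.insert[OF insert.hyps])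
  finally show ?case .
qed

lemma F_zero: "F (\<lambda>u. 0) = 0"
proof -
  have z: "(\<lambda>u. 0) \<in> Lmaps sU sV" unfolding Lmaps_def linear_iff
    by (auto simp: U.vector_space_axioms V.vector_space_axioms)
  show ?thesis using addF'[OF z z] by simp
qed

lemma F_sum: assumes "finite I" "\<forall>i\<in>I. f i \<in> Lmaps sU sV"
  shows "F (\<lambda>u. \<Sum>i\<in>I. f i u) = (\<Sum>i\<in>I. F (f i))"
  using assms
proof (induction I rule: finite_induct)
  case empty show ?case unfolding sum.empty by (rule F_zero)
next
  case (insert i I)
  have pI: "\<forall>i\<in>I. f i \<in> Lmaps sU sV" using insert.prems by blast
  have fi: "f i \<in> Lmaps sU sV" using insert.prems by blast
  have pI': "\<forall>i\<in>I. Vector_Spaces.linear sU sV (f i)" using pI unfolding Lmaps_def by blast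
  have l: "(\<lambda>u. \<Sum>i\<in>I. f i u) \<in> Lmaps sU sV"
    unfolding Lmaps_def mem_Collect_eq
    by (rule lin_sum[OF U.vector_space_axioms V.vector_space_axioms pI'])
  have e: "(\<lambda>u. \<Sum>i\<in>insert i I. f i u) = (\<lambda>u. f i u + (\<Sum>i\<in>I. f i u))"
    by (simp only: sum.insert[OF insert.hyps])
  have "F (\<lambda>u. \<Sum>i\<in>insert i I. f i u) = F (\<lambda>u. f i u + (\<Sum>i\<in>I. f i u))"
    unfolding e ..
  also have "\<dots> = F (f i) + F (\<lambda>u. \<Sum>i\<in>I. f i u)"
    by (rule addF'[OF fi l])
  also have "\<dots> = F (f i) + (\<Sum>i\<in>I. F (f i))" unfolding insert.IH[OF pI] ..
  also have "\<dots> = (\<Sum>i\<in>insert i I. F (f i))"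
    by (simp only: sum.insert[OF insert.hyps])
  finally show ?case .
qed

lemma dual_point: "\<exists>x. \<forall>\<phi>. lin \<phi> \<longrightarrow> alpha \<phi> = \<phi> x"
proof -
  obtain S where S: "finite S" "U.span S = UNIV" using finU unfolding fin_dim_def by blast
  obtain B where B: "U.independent B" "UNIV \<subseteq> U.span B" using U.basis_exists[of UNIV] by blast
  have fB: "finite B" using U.independent_span_bound[OF S(1) B(1)] S(2) by blast
  define d where "d b = (\<lambda>u. U.representation B u b)" for b
  have ld: "lin (d b)" for b unfolding d_def using U.linear_representation[OF B(1)] B(2) by blast
  define x where "x = (\<Sum>b\<in>B. sU (alpha (d b)) b)"
  have "alpha \<phi> = \<phi> x" if l: "lin \<phi>" for \<phi>
  proof -
    interpret phi: Vector_Spaces.linear sU "(*)" \<phi> by fact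
    have dec: "\<phi> u = (\<Sum>b\<in>B. \<phi> b * d b u)" for u
    proof -
      have "u \<in> U.span B" using B(2) by blast
      from U.sum_representation_eq[OF B(1) this fB subset_refl]
      have "u = (\<Sum>b\<in>B. sU (d b u) b)" unfolding d_def by simp
      hence "\<phi> u = \<phi> (\<Sum>b\<in>B. sU (d b u) b)" by (rule arg_cong)
      also have "\<dots> = (\<Sum>b\<in>B. \<phi> b * d b u)" by (simp add: phi.sum phi.scale mult.commute)
      finally show ?thesis .
    qed
    have "alpha \<phi> = alpha (\<lambda>u. \<Sum>b\<in>B. \<phi> b * d b u)" by (rule arg_cong[where f=alpha], rule ext, rule dec)
    also have "\<dots> = (\<Sum>b\<in>B. alpha (\<lambda>u. \<phi> b * d b u))"
      by (rule alpha_sum[OF fB], intro ballI lin_scale ld)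
    also have "\<dots> = (\<Sum>b\<in>B. \<phi> b * alpha (d b))"
      using alpha_scale[OF ld] by simp
    also have "\<dots> = \<phi> x" unfolding x_def by (simp add: phi.sum phi.scale mult.commute)
    finally show ?thesis .
  qed
  thus ?thesis by blast
qed

lemma main: "local_map sU sV F"
proof -
  obtain x where x: "\<And>\<phi>. lin \<phi> \<Longrightarrow> alpha \<phi> = \<phi> x" using dual_point by blast
  obtain S where S: "finite S" "V.span S = UNIV" using finV unfolding fin_dim_def by blast
  obtain E where E: "V.independent E" "UNIV \<subseteq> V.span E" using V.basis_exists[of UNIV] by blast
  have fE: "finite E" using V.independent_span_bound[OF S(1) E(1)] S(2) by blast
  have "F s = s x" if s: "s \<in> Lmaps sU sV" for s
  proof -
    have ls: "Vector_Spaces.linear sU sV s" using s unfolding Lmaps_def by blast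
    define p where "p e = (\<lambda>u. V.representation E (s u) e)" for e
    have lp: "lin (p e)" for e
    proof -
      have "Vector_Spaces.linear sV (*) (\<lambda>v. V.representation E v e)"
        using V.linear_representation[OF E(1)] E(2) by blast
      from Vector_Spaces.linear_compose[OF ls this] show ?thesis
        unfolding p_def comp_def .
    qed
    have sdec: "s = (\<lambda>u. \<Sum>e\<in>E. sV (p e u) e)"
    proof
      fix u
      have "s u \<in> V.span E" using E(2) by blast
      from V.sum_representation_eq[OF E(1) this fE subset_refl]
      show "s u = (\<Sum>e\<in>E. sV (p e u) e)" unfolding p_def by simp
    qed
    have "F s = F (\<lambda>u. \<Sum>e\<in>E. sV (p e u) e)" using sdec by simp
    also have "\<dots> = (\<Sum>e\<in>E. F (\<lambda>u. sV (p e u) e))"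
      using r_L[OF lp] by (intro F_sum[OF fE]) blast
    also have "\<dots> = (\<Sum>e\<in>E. sV (p e x) e)" using alpha_prop[OF lp] x[OF lp] by simp
    also have "\<dots> = s x" using fun_cong[OF sdec, of x] by simp
    finally show ?thesis .
  qed
  thus ?thesis unfolding local_map_def by blast
qed

end


theorem proposition2p5:
  fixes sU :: "'k::field \<Rightarrow> 'u::ab_group_add \<Rightarrow> 'u"
    and sV :: "'k \<Rightarrow> 'v::ab_group_add \<Rightarrow> 'v"
  assumes "vector_space sU" and "vector_space sV"
    and "fin_dim sU" and "fin_dim sV"
  shows "(\<forall>F. linear_on_L sU sV F \<and> range_compatible sU sV F \<longrightarrow> local_map sU sV F)
         \<and> (vector_space.dim sV (UNIV :: 'v set) > 1 \<longrightarrow>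
           (\<forall>F. additive_on_L sU sV F \<and> range_compatible sU sV F \<longrightarrow> local_map sU sV F))"
proof (cases "\<forall>v::'v. v = 0")
  case True
  have "local_map sU sV F" if "range_compatible sU sV F" for F
  proof -
    have "F s = s 0" if "s \<in> Lmaps sU sV" for s
      using True[rule_format, of "F s"] True[rule_format, of "s 0"] by simp
    thus ?thesis unfolding local_map_def by blast
  qed
  thus ?thesis by blast
next
  case False
  hence nz: "\<exists>u::'v. u \<noteq> 0" by blast
  interpret V: vector_space sV by fact
  have tw: "twovs sU sV" unfolding twovs_def using assms by blast
  have A: "local_map sU sV F" if "linear_on_L sU sV F" "range_compatible sU sV F" for F
  proof -
    have "rcF sU sV F" unfolding rcF_def rcF_axioms_def
      using tw that assms(3,4) nz unfolding linear_on_L_def by blast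
    thus ?thesis by (rule rcF.main)
  qed
  have B: "local_map sU sV F"
    if d: "V.dim (UNIV :: 'v set) > 1" and "additive_on_L sU sV F" "range_compatible sU sV F" for F
  proof -
    obtain u :: 'v where u: "u \<noteq> 0" using nz by blast
    have "\<exists>w. \<forall>c. w \<noteq> sV c u"
    proof (rule ccontr)
      assume "\<not> (\<exists>w. \<forall>c. w \<noteq> sV c u)"
      hence "UNIV \<subseteq> V.span {u}" unfolding V.span_singleton by auto
      from V.dim_le_card[OF this] have "V.dim (UNIV :: 'v set) \<le> 1" by simp
      thus False using d by simp
    qed
    hence h: "\<exists>u w. u \<noteq> 0 \<and> (\<forall>c. w \<noteq> sV c u)" using u by blast
    have "rcF sU sV F" unfolding rcF_def rcF_axioms_def
      using tw that(2,3) assms(3,4) nz h by blast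
    thus ?thesis by (rule rcF.main)
  qed
  show ?thesis using A B by blast
qed

end
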